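(* Let $f:\mathbb{R}^n\to\mathbb{R}$ be differentiable with $L$-Lipschitz gradient $\nabla f$. Let $\mathcal{E}^t$ denote the event $\|\nabla f(x^t)\|_\infty\le\eta$. If $x\in\mathbb{R}^n$ satisfies $\frac{L\alpha}{2}\|\nabla f(x)\|_1<\|\nabla f(x)\|_2^2$, then the iterate $x^{t+1}$ of Markov gradient descent satisfies $$\mathbb{E}\left[f(x^{t+1})\,\middle|\,x^t=x,\mathcal{E}^t\right]<f(x).$$ In particular, this holds whenever $\|\nabla f(x)\|_2>\frac{L\alpha\sqrt{n}}{2}$.
   Context: Markov gradient descent (MGD) with lattice resolution $\alpha>0$ and normalizer $\eta>0$: start at $x^0\in\alpha\mathbb{Z}^n$; at step $t$, for each coordinate $i$, conditionally on $x^t$, $\Delta^t_i\in\{0,1\}$ is Bernoulli with $\mathbb{P}[\Delta^t_i=1\mid x^t]=\min(|\partial_i f(x^t)|/\eta,1)$, and $x^{t+1}_i=x^t_i-\alpha\,\mathrm{sgn}(\partial_i f(x^t))\Delta^t_i$. *)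

theory Defs
  imports "HOL-Analysis.Analysis" "HOL-Probability.Probability"
begin

text \<open>Norms on R^n (vectors of type real^'n): sup-norm and 1-norm; the 2-norm is norm.\<close>
definition linf_norm :: "real^'n \<Rightarrow> real" where
  "linf_norm v = Max (range (\<lambda>i. \<bar>v $ i\<bar>))"

definition l1_norm :: "real^'n \<Rightarrow> real" where
  "l1_norm v = (\<Sum>i\<in>UNIV. \<bar>v $ i\<bar>)"

text \<open>One MGD step from x, given gradient vector gx and the random indicator vector d.\<close>
definition mgd_step :: "real \<Rightarrow> real^'n \<Rightarrow> real^'n \<Rightarrow> ('n \<Rightarrow> bool) \<Rightarrow> real^'n" where
  "mgd_step \<alpha> x gx d = x - (\<chi> i. \<alpha> * sgn (gx $ i) * (if d i then 1 else 0))"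

text \<open>Marginal acceptance probability of coordinate i.\<close>
definition mgd_prob :: "real \<Rightarrow> real^'n \<Rightarrow> 'n \<Rightarrow> real" where
  "mgd_prob \<eta> gx i = min (\<bar>gx $ i\<bar> / \<eta>) 1"

end

theory Submission imports Defs begin

lemma descent:
  fixes f :: "real^'n \<Rightarrow> real" and g :: "real^'n \<Rightarrow> real^'n"
  assumes grad: "\<And>y. (f has_derivative (\<lambda>h. g y \<bullet> h)) (at y)"
    and lip: "\<And>y z. norm (g y - g z) \<le> L * norm (y - z)"
  shows "f (x + h) \<le> f x + g x \<bullet> h + L/2 * (norm h)^2"
proof -
  define \<phi> where "\<phi> t = f (x + t *\<^sub>R h) - t * (g x \<bullet> h) - L/2 * t^2 * (norm h)^2" for t
  have d: "(\<phi> has_real_derivative ((g (x + t *\<^sub>R h) - g x) \<bullet> h - L * t * (norm h)^2)) (at t)" for t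
  proof -
    have l: "((\<lambda>t. x + t *\<^sub>R h) has_derivative (\<lambda>s. s *\<^sub>R h)) (at t)"
      by (auto intro!: derivative_eq_intros)
    have c: "((\<lambda>t. f (x + t *\<^sub>R h)) has_derivative (\<lambda>s. g (x + t *\<^sub>R h) \<bullet> (s *\<^sub>R h))) (at t)"
      using has_derivative_compose[OF l grad] .
    have "(\<phi> has_derivative (\<lambda>s. g (x + t *\<^sub>R h) \<bullet> (s *\<^sub>R h) - s * (g x \<bullet> h) - L/2 * (2 * t * s) * (norm h)^2)) (at t)"
      unfolding \<phi>_def
      by (rule c derivative_eq_intros refl | simp)+ (simp add: fun_eq_iff algebra_simps)
    then show ?thesis
      unfolding has_field_derivative_def
      by (rule has_derivative_eq_rhs) (auto simp: algebra_simps inner_diff_left fun_eq_iff)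
  qed
  have "\<phi> 1 \<le> \<phi> 0"
  proof (rule DERIV_nonpos_imp_nonincreasing[of 0 1])
    fix t :: real assume t: "0 \<le> t" "t \<le> 1"
    have "(g (x + t *\<^sub>R h) - g x) \<bullet> h \<le> norm (g (x + t *\<^sub>R h) - g x) * norm h"
      by (rule norm_cauchy_schwarz)
    also have "\<dots> \<le> L * norm (t *\<^sub>R h) * norm h"
      using lip[of "x + t *\<^sub>R h" x] by (intro mult_right_mono) auto
    also have "\<dots> = L * t * (norm h)^2" using t by (simp add: power2_eq_square)
    finally show "\<exists>y. DERIV \<phi> t :> y \<and> y \<le> 0" using d[of t] by auto
  qed auto
  then show ?thesis unfolding \<phi>_def by simp
qed

lemma main_part:
  fixes f :: "real^'n \<Rightarrow> real" and g :: "real^'n \<Rightarrow> real^'n"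
    and L \<alpha> \<eta> :: real and x :: "real^'n" and D :: "('n \<Rightarrow> bool) pmf"
  assumes grad: "\<And>y. (f has_derivative (\<lambda>h. g y \<bullet> h)) (at y)"
    and lip: "\<And>y z. norm (g y - g z) \<le> L * norm (y - z)"
    and alpha: "\<alpha> > 0" and eta: "\<eta> > 0"
    and event: "linf_norm (g x) \<le> \<eta>"
    and marg: "\<And>i. measure_pmf.prob D {d. d i} = mgd_prob \<eta> (g x) i"
    and cond: "L * \<alpha> / 2 * l1_norm (g x) < (norm (g x))\<^sup>2"
  shows "measure_pmf.expectation D (\<lambda>d. f (mgd_step \<alpha> x (g x) d)) < f x"
proof -
  define gx where "gx = g x"
  define s where "s d = (\<chi> i. \<alpha> * sgn (gx $ i) * (if d i then 1 else 0))" for d :: "'n \<Rightarrow> bool"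
  define c where "c i = \<alpha> * \<bar>gx $ i\<bar> - L/2 * \<alpha>^2 * \<bar>sgn (gx $ i)\<bar>" for i
  have fin: "finite (set_pmf D)" by (rule finite_subset[of _ UNIV]) auto
  have absle: "\<bar>gx $ i\<bar> \<le> \<eta>" for i
  proof -
    have "\<bar>gx $ i\<bar> \<le> linf_norm gx" unfolding linf_norm_def by (rule Max_ge) auto
    then show ?thesis using event gx_def by simp
  qed
  have P: "measure_pmf.prob D {d. d i} = \<bar>gx $ i\<bar> / \<eta>" for i
    using marg[of i] absle[of i] eta unfolding mgd_prob_def gx_def[symmetric] by auto
  have pw: "f (mgd_step \<alpha> x gx d) \<le> f x - (\<Sum>i\<in>UNIV. c i * indicator {d. d i} d)" for d
  proof -
    have st: "mgd_step \<alpha> x gx d = x + (- s d)" unfolding mgd_step_def s_def by simp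
    have i1: "gx \<bullet> (- s d) = - (\<Sum>i\<in>UNIV. \<alpha> * \<bar>gx $ i\<bar> * indicator {d. d i} d)"
    proof -
      have "gx \<bullet> s d = (\<Sum>i\<in>UNIV. \<alpha> * \<bar>gx $ i\<bar> * indicator {d. d i} d)"
        unfolding s_def inner_vec_def
        by (rule sum.cong) (auto simp: indicator_def sgn_if)
      then show ?thesis by simp
    qed
    have i2: "(norm (- s d))^2 = (\<Sum>i\<in>UNIV. \<alpha>^2 * \<bar>sgn (gx $ i)\<bar> * indicator {d. d i} d)"
      unfolding norm_minus_cancel power2_norm_eq_inner s_def inner_vec_def
      by (rule sum.cong) (auto simp: indicator_def sgn_if power2_eq_square)
    have "f (mgd_step \<alpha> x gx d) \<le> f x + gx \<bullet> (- s d) + L/2 * (norm (- s d))^2"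
      using descent[OF grad lip, of x "- s d"] st gx_def by simp
    also have "\<dots> = f x - (\<Sum>i\<in>UNIV. c i * indicator {d. d i} d)"
      unfolding i1 i2 c_def by (simp add: sum_distrib_left sum_subtractf sum_divide_distrib[symmetric] algebra_simps)
    finally show ?thesis .
  qed
  have "measure_pmf.expectation D (\<lambda>d. f (mgd_step \<alpha> x gx d))
      \<le> measure_pmf.expectation D (\<lambda>d. f x - (\<Sum>i\<in>UNIV. c i * indicator {d. d i} d))"
    by (rule integral_mono) (auto intro: integrable_measure_pmf_finite[OF fin] simp del: sum_mult_indicator intro!: pw)
  also have "\<dots> = f x - (\<Sum>i\<in>UNIV. c i * measure_pmf.prob D {d. d i})"
  proof -
    have "measure_pmf.expectation D (\<lambda>d. \<Sum>i\<in>UNIV. c i * indicator {d. d i} d)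
        = (\<Sum>i\<in>UNIV. measure_pmf.expectation D (\<lambda>d. c i * indicator {d. d i} d))"
      by (rule Bochner_Integration.integral_sum) (auto intro: integrable_measure_pmf_finite[OF fin])
    also have "\<dots> = (\<Sum>i\<in>UNIV. c i * measure_pmf.prob D {d. d i})"
      by simp
    finally show ?thesis
      by (subst Bochner_Integration.integral_diff)
         (auto intro!: integrable_measure_pmf_finite[OF fin] simp del: sum_mult_indicator)
  qed
  also have "\<dots> = f x - (\<alpha> * (norm gx)^2 - L * \<alpha> / 2 * \<alpha> * l1_norm gx) / \<eta>"
  proof -
    have "(\<Sum>i\<in>UNIV. c i * measure_pmf.prob D {d. d i})
        = (\<Sum>i\<in>UNIV. (\<alpha> * (gx $ i)^2 - L * \<alpha> / 2 * \<alpha> * \<bar>gx $ i\<bar>) / \<eta>)"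
      unfolding P c_def by (auto intro!: sum.cong simp: sgn_if power2_eq_square field_simps)
    also have "\<dots> = (\<alpha> * (norm gx)^2 - L * \<alpha> / 2 * \<alpha> * l1_norm gx) / \<eta>"
      unfolding power2_norm_eq_inner inner_vec_def l1_norm_def
      by (simp add: sum_divide_distrib[symmetric] sum_subtractf sum_distrib_left power2_eq_square)
    finally show ?thesis by simp
  qed
  also have "\<dots> < f x"
  proof -
    have "0 < \<alpha> * ((norm gx)^2 - L * \<alpha> / 2 * l1_norm gx)"
      using cond alpha gx_def by simp
    then show ?thesis using eta by (simp add: algebra_simps)
  qed
  finally show ?thesis unfolding gx_def .
qed

lemma l1_le_sqrt_card:
  fixes v :: "real^'n"
  shows "l1_norm v \<le> sqrt (CARD('n)) * norm v"
proof -
  have "l1_norm v = (\<chi> i. \<bar>v $ i\<bar>) \<bullet> (\<chi> i. 1)"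
    unfolding l1_norm_def inner_vec_def by simp
  also have "\<dots> \<le> norm (\<chi> i. \<bar>v $ i\<bar>) * norm ((\<chi> i. 1) :: real^'n)"
    by (rule norm_cauchy_schwarz)
  also have "norm (\<chi> i. \<bar>v $ i\<bar>) = norm v"
    unfolding norm_vec_def by simp
  also have "norm ((\<chi> i. 1) :: real^'n) = sqrt (CARD('n))"
    unfolding norm_vec_def L2_set_def by simp
  finally show ?thesis by (simp add: mult.commute)
qed

theorem corollary6p2:
  fixes f :: "real^'n \<Rightarrow> real" and g :: "real^'n \<Rightarrow> real^'n"
    and L \<alpha> \<eta> :: real and x :: "real^'n" and D :: "('n \<Rightarrow> bool) pmf"
  assumes grad: "\<And>y. (f has_derivative (\<lambda>h. g y \<bullet> h)) (at y)"
    and lip: "\<And>y z. norm (g y - g z) \<le> L * norm (y - z)"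
    and alpha: "\<alpha> > 0" and eta: "\<eta> > 0"
    and event: "linf_norm (g x) \<le> \<eta>"
    and marg: "\<And>i. measure_pmf.prob D {d. d i} = mgd_prob \<eta> (g x) i"
  shows "(L * \<alpha> / 2 * l1_norm (g x) < (norm (g x))\<^sup>2 \<longrightarrow>
            measure_pmf.expectation D (\<lambda>d. f (mgd_step \<alpha> x (g x) d)) < f x)
       \<and> (norm (g x) > L * \<alpha> * sqrt (CARD('n)) / 2 \<longrightarrow>
            measure_pmf.expectation D (\<lambda>d. f (mgd_step \<alpha> x (g x) d)) < f x)"
proof -
  note M = main_part[OF grad lip alpha eta event marg]
  have L0: "L \<ge> 0"
  proof -
    obtain i :: 'n where True by auto
    have "0 \<le> norm (g 0 - g (axis i 1))" by simp
    also have "\<dots> \<le> L * norm (0 - axis i (1::real))" by (rule lip)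
    also have "norm (0 - axis i (1::real)) = 1" by simp
    finally show ?thesis by simp
  qed
  have "L * \<alpha> / 2 * l1_norm (g x) < (norm (g x))\<^sup>2"
    if h: "norm (g x) > L * \<alpha> * sqrt (CARD('n)) / 2"
  proof -
    have "L * \<alpha> * sqrt (CARD('n)) \<ge> 0" using L0 alpha by simp
    then have np: "norm (g x) > 0" using h by linarith
    have "L * \<alpha> / 2 * l1_norm (g x) \<le> L * \<alpha> / 2 * (sqrt (CARD('n)) * norm (g x))"
      using L0 alpha l1_le_sqrt_card[of "g x"] by (intro mult_left_mono) auto
    also have "\<dots> = (L * \<alpha> * sqrt (CARD('n)) / 2) * norm (g x)" by simp
    also have "\<dots> < norm (g x) * norm (g x)"
      using h np by (intro mult_strict_right_mono) auto
    finally show ?thesis by (simp add: power2_eq_square)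
  qed
  then show ?thesis using M by blast
qed

end
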